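(* Under the Standing setup, for any invocation $\textsc{MSSP}(I,H_I)$ occurring during the execution of $\textsc{MSSP}([0,k-1],G)$, any $i\in I$ and any vertex $u\in V(H_I)\setminus V_\infty$, there exists a path from $r_i$ to $u$ in $H_I[(V(H_I)\setminus V_\infty)\cup\{r_i\}]$.
   Context: Standing setup. $G=(V,E)$ is a planar embedded directed graph (embedding given by a rotation system, i.e. the clockwise order of edges around each vertex) with non-negative edge weights (weight $\infty$ allowed), in which shortest paths are unique. The infinite face $f_\infty$ is a simple directed cycle all of whose edges have weight $\infty$; $V_\infty=\{r_0,\dots,r_{k-1}\}$ is its vertex set in clockwise order. It is assumed that no shortest path contains an edge entering a vertex of $V_\infty$, and that for every $r_i$ and every $u\in V\setminus V_\infty$ there is a path from $r_i$ to $u$ meeting $V_\infty$ only in $r_i$. For a graph $H$, $d_H(x,y)$ is the shortest-path distance and $P_H[x,y]$ the shortest path; for a rooted tree $T$ and vertex $v$ other than the root, $\pi_T(v)$ is the parent of $v$ in $T$. Contracting an edge set $E'$ (written $H/E'$) merges each connected component of $E'$ into one vertex (identified with a designated vertex of the component), deletes self-loops, and keeps only the cheapest edge among parallel edges; the rotation system is inherited. Procedure $\textsc{MSSP}(I=[i_1,i_2],H_I)$ (initial call $\textsc{MSSP}([0,k-1],G)$; the initial call is at recursion level $0$ and calls it makes are at level $h+1$ if it is at level $h$): let $i=\lfloor (i_1+i_2)/2\rfloor$. For each $m\in\{i_1,i,i_2\}$ compute and store the shortest-path tree $T_{I,m}$ from $r_m$ in $H_I[(V(H_I)\setminus V_\infty)\cup\{r_m\}]$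 (more generally, $T_{I,m}$ denotes this tree for any $m\in I$). If $i_2-i_1\le1$, stop. Otherwise, for each $J=[j_1,j_2]\in\{[i_1,i],[i,i_2]\}$: start with $H_J:=H_I$; let $E_{shared}=E(T_{I,j_1})\cap E(T_{I,j_2})$ (a forest). For each vertex $s$ with $\pi_{T_{I,j_1}}(s)\ne\pi_{T_{I,j_2}}(s)$, let $T(s)$ be the tree rooted at $s$ consisting of every edge $(s,v)\in E_{shared}$ such that $(s,v),(s,\pi_{T_{I,j_1}}(s)),(s,\pi_{T_{I,j_2}}(s))$ are in clockwise order around $s$, together with all edges of $E_{shared}$ descending from such $v$; let $\mathcal T_J$ be the collection of these (vertex-disjoint, maximal) trees. For each $T(s)\in\mathcal T_J$: for every $u\in T(s)$ record $s_J(u):=s$ and $\delta_J(u):=d_{T(s)}(s,u)$; for every edge $(u,v)$ of $H_J$ with exactly one endpoint in $T(s)$, if $u\in T(s)$ increase its weight by $\delta_J(u)$, and if $v\in T(s)\setminus\{s\}$ set its weight to $\infty$; then contract $T(s)$ to a single vertex identified with $s$. For vertices $u$ of $H_I$ in no tree of $\mathcal T_J$, set $s_J(u):=u$, $\delta_J(u):=0$. Then call $\textsc{MSSP}(J,H_J)$. *)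

theory Defs
  imports Main "HOL-Library.Extended_Nonnegative_Real"
begin

text \<open>The rotation system is a permutation of darts; the dart
(e, True) is the end of e at its tail, (e, False) the end at its head. grot gives the
clockwise successor of a dart around its vertex.\<close>

record ('v, 'e) emb_graph =
  gV   :: "'v set"
  gE   :: "'e set"
  gtl  :: "'e \<Rightarrow> 'v"
  ghd  :: "'e \<Rightarrow> 'v"
  gw   :: "'e \<Rightarrow> ennreal"
  grot :: "'e \<times> bool \<Rightarrow> 'e \<times> bool"

fun walk :: "('e \<Rightarrow> 'v) \<Rightarrow> ('e \<Rightarrow> 'v) \<Rightarrow> 'e set \<Rightarrow> 'v set \<Rightarrow> 'v \<Rightarrow> 'e list \<Rightarrow> 'v \<Rightarrow> bool" where
  "walk ft fh A S x [] y \<longleftrightarrow> x = y \<and> x \<in> S"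
| "walk ft fh A S x (e # es) y \<longleftrightarrow> e \<in> A \<and> ft e = x \<and> x \<in> S \<and> walk ft fh A S (fh e) es y"

definition spath :: "('e \<Rightarrow> 'v) \<Rightarrow> ('e \<Rightarrow> 'v) \<Rightarrow> 'e set \<Rightarrow> 'v set \<Rightarrow> 'v \<Rightarrow> 'e list \<Rightarrow> 'v \<Rightarrow> bool" where
  "spath ft fh A S x es y \<longleftrightarrow> walk ft fh A S x es y \<and> distinct (x # map fh es)"

definition path_w :: "('e \<Rightarrow> ennreal) \<Rightarrow> 'e list \<Rightarrow> ennreal" where
  "path_w w es = sum_list (map w es)"

definition dist_on :: "('e \<Rightarrow> 'v) \<Rightarrow> ('e \<Rightarrow> 'v) \<Rightarrow> ('e \<Rightarrow> ennreal) \<Rightarrow> 'e set \<Rightarrow> 'v set \<Rightarrow> 'v \<Rightarrow> 'v \<Rightarrow> ennreal" where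
  "dist_on ft fh w A S x y = (INF es \<in> {es. spath ft fh A S x es y}. path_w w es)"

definition gpath :: "('v,'e) emb_graph \<Rightarrow> 'v set \<Rightarrow> 'v \<Rightarrow> 'e list \<Rightarrow> 'v \<Rightarrow> bool" where
  "gpath H S x es y = spath (gtl H) (ghd H) (gE H) S x es y"

definition gdist :: "('v,'e) emb_graph \<Rightarrow> 'v set \<Rightarrow> 'v \<Rightarrow> 'v \<Rightarrow> ennreal" where
  "gdist H S x y = dist_on (gtl H) (ghd H) (gw H) (gE H) S x y"

definition darts :: "('v,'e) emb_graph \<Rightarrow> ('e \<times> bool) set" where
  "darts H = gE H \<times> (UNIV :: bool set)"

definition dvert :: "('v,'e) emb_graph \<Rightarrow> 'e \<times> bool \<Rightarrow> 'v" where
  "dvert H d = (if snd d then gtl H (fst d) else ghd H (fst d))"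

definition alpha :: "'e \<times> bool \<Rightarrow> 'e \<times> bool" where
  "alpha d = (fst d, \<not> snd d)"

definition rotation_system :: "('v,'e) emb_graph \<Rightarrow> bool" where
  "rotation_system H \<longleftrightarrow>
     bij_betw (grot H) (darts H) (darts H) \<and>
     (\<forall>d\<in>darts H. dvert H (grot H d) = dvert H d) \<and>
     (\<forall>d\<in>darts H. \<forall>d'\<in>darts H. dvert H d = dvert H d' \<longrightarrow> (\<exists>n. (grot H ^^ n) d = d'))"

text \<open>Face traversal: cross the edge, then turn to the clockwise next dart
(faces lie to the left, so the outer face is traversed clockwise).\<close>
definition face_step :: "('v,'e) emb_graph \<Rightarrow> 'e \<times> bool \<Rightarrow> 'e \<times> bool" where
  "face_step H d = grot H (alpha d)"

definition face_orbit :: "('v,'e) emb_graph \<Rightarrow> 'e \<times> bool \<Rightarrow> ('e \<times> bool) set" where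
  "face_orbit H d = {(face_step H ^^ n) d | n. True}"

definition faces :: "('v,'e) emb_graph \<Rightarrow> ('e \<times> bool) set set" where
  "faces H = face_orbit H ` darts H"

definition weakly_connected :: "('v,'e) emb_graph \<Rightarrow> bool" where
  "weakly_connected H \<longleftrightarrow> (\<forall>u\<in>gV H. \<forall>v\<in>gV H.
     (u, v) \<in> (\<Union>e\<in>gE H. {(gtl H e, ghd H e), (ghd H e, gtl H e)})\<^sup>*)"

text \<open>Planar embedded (connected) graph: a genus-0 rotation system (Euler's formula).\<close>
definition planar_embedded :: "('v,'e) emb_graph \<Rightarrow> bool" where
  "planar_embedded H \<longleftrightarrow> finite (gV H) \<and> finite (gE H) \<and>
     (\<forall>e\<in>gE H. gtl H e \<in> gV H \<and> ghd H e \<in> gV H) \<and>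
     rotation_system H \<and> weakly_connected H \<and>
     card (gV H) + card (faces H) = card (gE H) + 2"

text \<open>The infinite face is a simple directed cycle (in one of the two orientations) of
infinite-weight edges, whose vertices in clockwise order are r 0, ..., r (k-1).\<close>
definition outer_face :: "('v,'e) emb_graph \<Rightarrow> (nat \<Rightarrow> 'v) \<Rightarrow> nat \<Rightarrow> bool" where
  "outer_face H r k \<longleftrightarrow> 0 < k \<and> inj_on r {..<k} \<and>
     (\<exists>(c :: nat \<Rightarrow> 'e) (fw :: bool). inj_on c {..<k} \<and>
        (\<forall>i<k. c i \<in> gE H \<and> gw H (c i) = top \<and>
           (if fw then gtl H (c i) = r i \<and> ghd H (c i) = r (Suc i mod k)
            else gtl H (c i) = r (Suc i mod k) \<and> ghd H (c i) = r i)) \<and>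
        (\<forall>i<k. face_step H (c i, fw) = (c (Suc i mod k), fw)) \<and>
        face_orbit H (c 0, fw) = (\<lambda>i. (c i, fw)) ` {..<k})"

definition cw_order :: "('d \<Rightarrow> 'd) \<Rightarrow> 'd \<Rightarrow> 'd \<Rightarrow> 'd \<Rightarrow> bool" where
  "cw_order \<sigma> a b c \<longleftrightarrow> (\<exists>i j. 0 < i \<and> i < j \<and> (\<sigma> ^^ i) a = b \<and> (\<sigma> ^^ j) a = c \<and>
      (\<forall>l. 0 < l \<and> l \<le> j \<longrightarrow> (\<sigma> ^^ l) a \<noteq> a))"

definition sp_tree :: "('v,'e) emb_graph \<Rightarrow> 'v set \<Rightarrow> 'v \<Rightarrow> 'e set \<Rightarrow> bool" where
  "sp_tree H S rt T \<longleftrightarrow> T \<subseteq> gE H \<and>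
     (\<forall>e\<in>T. gtl H e \<in> S \<and> ghd H e \<in> S \<and> ghd H e \<noteq> rt) \<and>
     (\<forall>e\<in>T. \<forall>e'\<in>T. ghd H e = ghd H e' \<longrightarrow> e = e') \<and>
     insert rt (ghd H ` T) = {y \<in> S. gdist H S rt y < top} \<and>
     (\<forall>y \<in> insert rt (ghd H ` T). \<exists>es. set es \<subseteq> T \<and> gpath H S rt es y \<and>
         path_w (gw H) es = gdist H S rt y)"

definition pedge :: "('v,'e) emb_graph \<Rightarrow> 'e set \<Rightarrow> 'v \<Rightarrow> 'e" where
  "pedge H T v = (THE e. e \<in> T \<and> ghd H e = v)"

definition tparent :: "('v,'e) emb_graph \<Rightarrow> 'e set \<Rightarrow> 'v \<Rightarrow> 'v" where
  "tparent H T v = gtl H (pedge H T v)"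

section \<open>One recursion step: building H_J from H_I and T1 = T_{I,j1}, T2 = T_{I,j2}\<close>

definition sh_roots :: "('v,'e) emb_graph \<Rightarrow> 'e set \<Rightarrow> 'e set \<Rightarrow> 'v set" where
  "sh_roots H T1 T2 = {s. s \<in> ghd H ` T1 \<and> s \<in> ghd H ` T2 \<and> tparent H T1 s \<noteq> tparent H T2 s}"

definition sh_chosen :: "('v,'e) emb_graph \<Rightarrow> 'e set \<Rightarrow> 'e set \<Rightarrow> 'v \<Rightarrow> 'e set" where
  "sh_chosen H T1 T2 s = {e \<in> T1 \<inter> T2. gtl H e = s \<and>
      cw_order (grot H) (e, True) (pedge H T1 s, False) (pedge H T2 s, False)}"

definition sh_rel :: "('v,'e) emb_graph \<Rightarrow> 'e set \<Rightarrow> ('v \<times> 'v) set" where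
  "sh_rel H A = {(gtl H e, ghd H e) | e. e \<in> A}"

definition sub_edges :: "('v,'e) emb_graph \<Rightarrow> 'e set \<Rightarrow> 'e set \<Rightarrow> 'v \<Rightarrow> 'e set" where
  "sub_edges H T1 T2 s = {e \<in> T1 \<inter> T2. \<exists>c \<in> sh_chosen H T1 T2 s.
      e = c \<or> (ghd H c, gtl H e) \<in> (sh_rel H (T1 \<inter> T2))\<^sup>*}"

definition sub_verts :: "('v,'e) emb_graph \<Rightarrow> 'e set \<Rightarrow> 'e set \<Rightarrow> 'v \<Rightarrow> 'v set" where
  "sub_verts H T1 T2 s = insert s (ghd H ` sub_edges H T1 T2 s)"

definition ctr_edges :: "('v,'e) emb_graph \<Rightarrow> 'e set \<Rightarrow> 'e set \<Rightarrow> 'e set" where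
  "ctr_edges H T1 T2 = (\<Union>s\<in>sh_roots H T1 T2. sub_edges H T1 T2 s)"

definition ctr_verts :: "('v,'e) emb_graph \<Rightarrow> 'e set \<Rightarrow> 'e set \<Rightarrow> 'v set" where
  "ctr_verts H T1 T2 = (\<Union>s\<in>sh_roots H T1 T2. sub_verts H T1 T2 s)"

definition sJ :: "('v,'e) emb_graph \<Rightarrow> 'e set \<Rightarrow> 'e set \<Rightarrow> 'v \<Rightarrow> 'v" where
  "sJ H T1 T2 u = (if u \<in> ctr_verts H T1 T2
      then (THE s. s \<in> sh_roots H T1 T2 \<and> u \<in> sub_verts H T1 T2 s) else u)"

definition deltaJ :: "('v,'e) emb_graph \<Rightarrow> 'e set \<Rightarrow> 'e set \<Rightarrow> 'v \<Rightarrow> ennreal" where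
  "deltaJ H T1 T2 u = (if u \<in> ctr_verts H T1 T2
      then dist_on (gtl H) (ghd H) (gw H) (sub_edges H T1 T2 (sJ H T1 T2 u))
             (sub_verts H T1 T2 (sJ H T1 T2 u)) (sJ H T1 T2 u) u
      else 0)"

definition wJ :: "('v,'e) emb_graph \<Rightarrow> 'e set \<Rightarrow> 'e set \<Rightarrow> 'e \<Rightarrow> ennreal" where
  "wJ H T1 T2 e = (let a = sJ H T1 T2 (gtl H e); b = sJ H T1 T2 (ghd H e) in
      if a \<noteq> b \<and> ghd H e \<in> ctr_verts H T1 T2 \<and> ghd H e \<noteq> b then top
      else if a \<noteq> b then gw H e + deltaJ H T1 T2 (gtl H e)
      else gw H e)"

definition nonloop :: "('v,'e) emb_graph \<Rightarrow> 'e set \<Rightarrow> 'e set \<Rightarrow> 'e set" where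
  "nonloop H T1 T2 = {e \<in> gE H. sJ H T1 T2 (gtl H e) \<noteq> sJ H T1 T2 (ghd H e)}"

definition keep_ok :: "('v,'e) emb_graph \<Rightarrow> 'e set \<Rightarrow> 'e set \<Rightarrow> 'e set \<Rightarrow> bool" where
  "keep_ok H T1 T2 K \<longleftrightarrow> K \<subseteq> nonloop H T1 T2 \<and>
     (\<forall>e\<in>nonloop H T1 T2. \<exists>!e'. e' \<in> K \<and>
         sJ H T1 T2 (gtl H e') = sJ H T1 T2 (gtl H e) \<and> sJ H T1 T2 (ghd H e') = sJ H T1 T2 (ghd H e)) \<and>
     (\<forall>e\<in>K. \<forall>e'\<in>nonloop H T1 T2.
         sJ H T1 T2 (gtl H e') = sJ H T1 T2 (gtl H e) \<and> sJ H T1 T2 (ghd H e') = sJ H T1 T2 (ghd H e)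
         \<longrightarrow> wJ H T1 T2 e \<le> wJ H T1 T2 e')"

text \<open>Inherited rotation: contracting the forest F (walk around it), then deleting all
edges not in K (skip their darts).\<close>
definition ctr_step :: "('v,'e) emb_graph \<Rightarrow> 'e set \<Rightarrow> 'e \<times> bool \<Rightarrow> 'e \<times> bool" where
  "ctr_step H F x = (let g = (\<lambda>y. grot H (alpha y)) in
      (g ^^ (LEAST n. (g ^^ n) (grot H x) \<notin> F \<times> UNIV)) (grot H x))"

definition ctr_rot :: "('v,'e) emb_graph \<Rightarrow> 'e set \<Rightarrow> 'e set \<Rightarrow> 'e \<times> bool \<Rightarrow> 'e \<times> bool" where
  "ctr_rot H F K d = (if d \<in> K \<times> UNIV
      then (ctr_step H F ^^ (LEAST n. 0 < n \<and> (ctr_step H F ^^ n) d \<in> K \<times> UNIV)) d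
      else d)"

definition child_graph :: "('v,'e) emb_graph \<Rightarrow> 'e set \<Rightarrow> 'e set \<Rightarrow> 'e set \<Rightarrow> ('v,'e) emb_graph" where
  "child_graph H T1 T2 K =
     \<lparr> gV = sJ H T1 T2 ` gV H, gE = K,
       gtl = (\<lambda>e. sJ H T1 T2 (gtl H e)), ghd = (\<lambda>e. sJ H T1 T2 (ghd H e)),
       gw = wJ H T1 T2, grot = ctr_rot H (ctr_edges H T1 T2) K \<rparr>"

definition Sm :: "('v,'e) emb_graph \<Rightarrow> (nat \<Rightarrow> 'v) \<Rightarrow> nat \<Rightarrow> nat \<Rightarrow> 'v set" where
  "Sm H r k m = (gV H - r ` {..<k}) \<union> {r m}"

text \<open>mssp_call r k G i1 i2 H: the invocation MSSP([i1,i2], H) occurs during the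
execution of MSSP([0,k-1], G).\<close>
inductive mssp_call :: "(nat \<Rightarrow> 'v) \<Rightarrow> nat \<Rightarrow> ('v,'e) emb_graph \<Rightarrow> nat \<Rightarrow> nat \<Rightarrow> ('v,'e) emb_graph \<Rightarrow> bool"
  for r k G where
  init: "mssp_call r k G 0 (k - 1) G"
| left: "\<lbrakk> mssp_call r k G i1 i2 H; Suc i1 < i2;
           sp_tree H (Sm H r k i1) (r i1) Ta;
           sp_tree H (Sm H r k ((i1 + i2) div 2)) (r ((i1 + i2) div 2)) Tm;
           sp_tree H (Sm H r k i2) (r i2) Tb;
           keep_ok H Ta Tm K \<rbrakk>
         \<Longrightarrow> mssp_call r k G i1 ((i1 + i2) div 2) (child_graph H Ta Tm K)"
| right: "\<lbrakk> mssp_call r k G i1 i2 H; Suc i1 < i2;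
           sp_tree H (Sm H r k i1) (r i1) Ta;
           sp_tree H (Sm H r k ((i1 + i2) div 2)) (r ((i1 + i2) div 2)) Tm;
           sp_tree H (Sm H r k i2) (r i2) Tb;
           keep_ok H Tm Tb K \<rbrakk>
         \<Longrightarrow> mssp_call r k G ((i1 + i2) div 2) i2 (child_graph H Tm Tb K)"

end

theory Submission
  imports Defs
begin

lemma walk_map:
  assumes "walk ta ha A S x es y" "\<forall>z\<in>S. f z \<in> S'"
    "\<forall>e\<in>A. f (ta e) \<noteq> f (ha e) \<longrightarrow> (\<exists>e'\<in>K. tlq e' = f (ta e) \<and> hdq e' = f (ha e))"
  shows "\<exists>es'. walk tlq hdq K S' (f x) es' (f y)"
  using assms(1)
proof (induction es arbitrary: x)
  case Nil
  then show ?case using assms(2) by (intro exI[of _ "[]"]) auto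
next
  case (Cons e es)
  then have e: "e \<in> A" "ta e = x" "x \<in> S" "walk ta ha A S (ha e) es y" by auto
  then obtain es' where w: "walk tlq hdq K S' (f (ha e)) es' (f y)" using Cons.IH by blast
  show ?case
  proof (cases "f x = f (ha e)")
    case True then show ?thesis using w by metis
  next
    case False
    then obtain e' where "e' \<in> K" "tlq e' = f x" "hdq e' = f (ha e)" using assms(3) e by metis
    then have "walk tlq hdq K S' (f x) (e' # es') (f y)" using w e assms(2) by auto
    then show ?thesis by blast
  qed
qed

lemma walk_suffix:
  "walk ft fh A S x es y \<Longrightarrow> j < length es \<Longrightarrow> walk ft fh A S (fh (es ! j)) (drop (Suc j) es) y"
proof (induction es arbitrary: x j)
  case Nil then show ?case by simp
next
  case (Cons e es)
  show ?case
  proof (cases j)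
    case 0 then show ?thesis using Cons.prems by simp
  next
    case (Suc j') then show ?thesis using Cons.IH[of "fh e" j'] Cons.prems by simp
  qed
qed

lemma walk_to_spath:
  "walk ft fh A S x es y \<Longrightarrow> \<exists>es'. spath ft fh A S x es' y"
proof (induction es arbitrary: x)
  case Nil then show ?case unfolding spath_def by (intro exI[of _ "[]"]) auto
next
  case (Cons e es)
  then have e: "e \<in> A" "ft e = x" "x \<in> S" "walk ft fh A S (fh e) es y" by auto
  then obtain p where p: "spath ft fh A S (fh e) p y" using Cons.IH by blast
  then have pw: "walk ft fh A S (fh e) p y" and pd: "distinct (fh e # map fh p)"
    unfolding spath_def by auto
  show ?case
  proof (cases "x \<in> set (fh e # map fh p)")
    case False
    then have "spath ft fh A S x (e # p) y" unfolding spath_def using e pw pd by auto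
    then show ?thesis by blast
  next
    case True
    show ?thesis
    proof (cases "x = fh e")
      case True then show ?thesis using p by blast
    next
      case False
      then have "x \<in> set (map fh p)" using True by simp
      then obtain j where j: "j < length p" "fh (p ! j) = x" by (auto simp: in_set_conv_nth)
      have w: "walk ft fh A S x (drop (Suc j) p) y" using walk_suffix[OF pw j(1)] j by simp
      have "x # map fh (drop (Suc j) p) = drop j (map fh p)"
        using j by (simp add: Cons_nth_drop_Suc[symmetric] drop_map)
      moreover have "distinct (drop j (map fh p))" using pd by (simp add: distinct_drop)
      ultimately have "spath ft fh A S x (drop (Suc j) p) y" unfolding spath_def using w by simp
      then show ?thesis by blast
    qed
  qed
qed

lemma trancl_cmp:
  assumes "(a, v) \<in> R\<^sup>+" "(b, v) \<in> R\<^sup>+"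
    and inj: "\<And>x x' y. (x, y) \<in> R \<Longrightarrow> (x', y) \<in> R \<Longrightarrow> x = x'"
  shows "a = b \<or> (a, b) \<in> R\<^sup>+ \<or> (b, a) \<in> R\<^sup>+"
  using assms(1,2)
proof (induction arbitrary: b rule: trancl_induct)
  case (base y)
  from base.prems show ?case
  proof (cases rule: tranclE)
    case base then show ?thesis using inj \<open>(a, y) \<in> R\<close> by blast
  next
    case (step c)
    then have "c = a" using inj \<open>(a, y) \<in> R\<close> by blast
    then show ?thesis using step by blast
  qed
next
  case (step y z)
  from step.prems show ?case
  proof (cases rule: tranclE)
    case base
    then have "b = y" using inj step.hyps(2) by blast
    then show ?thesis using step.hyps(1) by blast
  next
    case (step c)
    then have "c = y" using inj \<open>(y, z) \<in> R\<close> by blast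
    then show ?thesis using step.IH step by blast
  qed
qed

lemma trancl_head:
  "(a, b) \<in> (sh_rel H F)\<^sup>+ \<Longrightarrow> \<exists>f\<in>F. ghd H f = b"
  by (erule tranclE) (auto simp: sh_rel_def)

lemma sh_rel_inj:
  assumes "\<forall>e\<in>T. \<forall>e'\<in>T. ghd H e = ghd H e' \<longrightarrow> e = e'" "F \<subseteq> T"
    "(x, y) \<in> sh_rel H F" "(x', y) \<in> sh_rel H F"
  shows "x = x'"
  using assms unfolding sh_rel_def by blast

lemma pedge_eq:
  assumes "\<forall>e\<in>T. \<forall>e'\<in>T. ghd H e = ghd H e' \<longrightarrow> e = e'" "f \<in> T"
  shows "pedge H T (ghd H f) = f"
  unfolding pedge_def using assms by (intro the_equality) auto

lemma root_not_head:
  assumes i1: "\<forall>e\<in>T1. \<forall>e'\<in>T1. ghd H e = ghd H e' \<longrightarrow> e = e'"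
    and i2: "\<forall>e\<in>T2. \<forall>e'\<in>T2. ghd H e = ghd H e' \<longrightarrow> e = e'"
    and s: "s \<in> sh_roots H T1 T2" and f: "f \<in> T1 \<inter> T2" "ghd H f = s"
  shows False
proof -
  have "pedge H T1 s = f" "pedge H T2 s = f" using pedge_eq[OF i1] pedge_eq[OF i2] f by auto
  then show False using s unfolding sh_roots_def tparent_def by auto
qed

lemma sub_verts_trancl:
  assumes "v \<in> sub_verts H T1 T2 s" "v \<noteq> s"
  shows "(s, v) \<in> (sh_rel H (T1 \<inter> T2))\<^sup>+"
proof -
  let ?R = "sh_rel H (T1 \<inter> T2)"
  obtain e where e: "e \<in> sub_edges H T1 T2 s" "v = ghd H e" using assms unfolding sub_verts_def by auto
  then obtain c where c: "c \<in> sh_chosen H T1 T2 s" "e = c \<or> (ghd H c, gtl H e) \<in> ?R\<^sup>*"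
    and eT: "e \<in> T1 \<inter> T2" unfolding sub_edges_def by auto
  have cT: "c \<in> T1 \<inter> T2" "gtl H c = s" using c(1) unfolding sh_chosen_def by auto
  have sc: "(s, ghd H c) \<in> ?R" using cT unfolding sh_rel_def by auto
  have ee: "(gtl H e, ghd H e) \<in> ?R" using eT unfolding sh_rel_def by auto
  from c(2) show ?thesis
  proof
    assume "e = c" then show ?thesis using sc e by auto
  next
    assume h: "(ghd H c, gtl H e) \<in> ?R\<^sup>*"
    have "(s, gtl H e) \<in> ?R\<^sup>*" using sc h by (meson converse_rtrancl_into_rtrancl)
    then show ?thesis using ee e by (simp add: rtrancl_into_trancl1)
  qed
qed

lemma sub_verts_unique:
  assumes i1: "\<forall>e\<in>T1. \<forall>e'\<in>T1. ghd H e = ghd H e' \<longrightarrow> e = e'"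
    and i2: "\<forall>e\<in>T2. \<forall>e'\<in>T2. ghd H e = ghd H e' \<longrightarrow> e = e'"
    and s: "s \<in> sh_roots H T1 T2" and s': "s' \<in> sh_roots H T1 T2"
    and v: "v \<in> sub_verts H T1 T2 s" "v \<in> sub_verts H T1 T2 s'"
  shows "s = s'"
proof (rule ccontr)
  assume ne: "s \<noteq> s'"
  let ?R = "sh_rel H (T1 \<inter> T2)"
  have nohead: "\<And>a x. x \<in> sh_roots H T1 T2 \<Longrightarrow> (a, x) \<in> ?R\<^sup>+ \<Longrightarrow> False"
    using trancl_head root_not_head[OF i1 i2] by metis
  show False
  proof (cases "v = s")
    case True
    then have "(s', s) \<in> ?R\<^sup>+" using sub_verts_trancl[OF v(2)] ne by auto
    then show False using nohead s by blast
  next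
    case False
    show False
    proof (cases "v = s'")
      case True
      then have "(s, s') \<in> ?R\<^sup>+" using sub_verts_trancl[OF v(1)] ne by auto
      then show False using nohead s' by blast
    next
      case False2: False
      have a: "(s, v) \<in> ?R\<^sup>+" using sub_verts_trancl[OF v(1)] False by auto
      have b: "(s', v) \<in> ?R\<^sup>+" using sub_verts_trancl[OF v(2)] False2 by auto
      have inj: "\<And>x x' y. (x, y) \<in> ?R \<Longrightarrow> (x', y) \<in> ?R \<Longrightarrow> x = x'"
        by (rule sh_rel_inj[OF i1 Int_lower1])
      have "s = s' \<or> (s, s') \<in> ?R\<^sup>+ \<or> (s', s) \<in> ?R\<^sup>+"
        by (rule trancl_cmp[OF a b]) (rule inj)
      then show False using ne nohead s s' by blast
    qed
  qed
qed

lemma sp_heads: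
  assumes "sp_tree H (Sm H r k m) (r m) T" "e \<in> T"
  shows "ghd H e \<in> gV H - r ` {..<k}"
  using assms unfolding sp_tree_def Sm_def by auto

lemma sp_inj:
  assumes "sp_tree H S rt T"
  shows "\<forall>e\<in>T. \<forall>e'\<in>T. ghd H e = ghd H e' \<longrightarrow> e = e'"
  using assms unfolding sp_tree_def by auto

lemma ctr_sub:
  assumes sp1: "sp_tree H (Sm H r k a) (r a) T1"
  shows "ctr_verts H T1 T2 \<subseteq> gV H - r ` {..<k}"
proof
  fix v assume "v \<in> ctr_verts H T1 T2"
  then obtain s where s: "s \<in> sh_roots H T1 T2" "v \<in> sub_verts H T1 T2 s"
    unfolding ctr_verts_def by auto
  have "s \<in> ghd H ` T1" using s unfolding sh_roots_def by auto
  then have "s \<in> gV H - r ` {..<k}" using sp_heads[OF sp1] by auto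
  moreover have "v \<noteq> s \<Longrightarrow> v \<in> ghd H ` T1" using s(2)
    unfolding sub_verts_def sub_edges_def by auto
  ultimately show "v \<in> gV H - r ` {..<k}" using sp_heads[OF sp1] by (cases "v = s") auto
qed

lemma sJ_ctr:
  assumes sp1: "sp_tree H (Sm H r k a) (r a) T1" and sp2: "sp_tree H (Sm H r k b) (r b) T2"
    and v: "v \<in> ctr_verts H T1 T2"
  shows "sJ H T1 T2 v \<in> gV H - r ` {..<k}"
proof -
  obtain s where s: "s \<in> sh_roots H T1 T2" "v \<in> sub_verts H T1 T2 s"
    using v unfolding ctr_verts_def by auto
  have "sJ H T1 T2 v = s" unfolding sJ_def using v s
    sub_verts_unique[OF sp_inj[OF sp1] sp_inj[OF sp2]] by (auto intro!: the_equality)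
  moreover have "s \<in> ghd H ` T1" using s unfolding sh_roots_def by auto
  then obtain e0 where "e0 \<in> T1" "s = ghd H e0" by blast
  then have "s \<in> gV H - r ` {..<k}" using sp_heads[OF sp1] by simp
  ultimately show ?thesis by simp
qed

lemma step_lemma:
  assumes IH: "\<forall>u\<in>gV H - r ` {..<k}. \<exists>es. gpath H ((gV H - r ` {..<k}) \<union> {r i}) (r i) es u"
    and sp1: "sp_tree H (Sm H r k a) (r a) T1" and sp2: "sp_tree H (Sm H r k b) (r b) T2"
    and K: "keep_ok H T1 T2 K" and ik: "i < k"
    and u: "u \<in> gV (child_graph H T1 T2 K) - r ` {..<k}"
  shows "\<exists>es. gpath (child_graph H T1 T2 K) ((gV (child_graph H T1 T2 K) - r ` {..<k}) \<union> {r i}) (r i) es u"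
proof -
  let ?R = "r ` {..<k}"
  let ?f = "sJ H T1 T2"
  have fR: "\<And>x. x \<in> ?R \<Longrightarrow> ?f x = x"
    using ctr_sub[OF sp1, of T2] unfolding sJ_def by auto
  have fnR: "\<And>x. x \<in> gV H - ?R \<Longrightarrow> ?f x \<notin> ?R"
    using sJ_ctr[OF sp1 sp2] unfolding sJ_def by auto
  obtain v where v: "v \<in> gV H" "u = ?f v" using u by (auto simp: child_graph_def)
  have vR: "v \<notin> ?R" using fR v u by auto
  obtain es where es: "gpath H ((gV H - ?R) \<union> {r i}) (r i) es v" using IH v vR by blast
  have w: "walk (gtl H) (ghd H) (gE H) ((gV H - ?R) \<union> {r i}) (r i) es v"
    using es unfolding gpath_def spath_def by auto
  have S: "\<forall>z\<in>(gV H - ?R) \<union> {r i}. ?f z \<in> (?f ` gV H - ?R) \<union> {r i}"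
    using fR fnR ik by auto
  have E: "\<forall>e\<in>gE H. ?f (gtl H e) \<noteq> ?f (ghd H e) \<longrightarrow>
      (\<exists>e'\<in>K. ?f (gtl H e') = ?f (gtl H e) \<and> ?f (ghd H e') = ?f (ghd H e))"
  proof (intro ballI impI)
    fix e assume "e \<in> gE H" "?f (gtl H e) \<noteq> ?f (ghd H e)"
    then have "e \<in> nonloop H T1 T2" unfolding nonloop_def by auto
    then show "\<exists>e'\<in>K. ?f (gtl H e') = ?f (gtl H e) \<and> ?f (ghd H e') = ?f (ghd H e)"
      using K unfolding keep_ok_def by blast
  qed
  obtain es' where "walk (\<lambda>e. ?f (gtl H e)) (\<lambda>e. ?f (ghd H e)) K ((?f ` gV H - ?R) \<union> {r i}) (?f (r i)) es' (?f v)"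
    using walk_map[OF w S E] by blast
  moreover have "?f (r i) = r i" using fR ik by auto
  ultimately have "walk (gtl (child_graph H T1 T2 K)) (ghd (child_graph H T1 T2 K)) (gE (child_graph H T1 T2 K))
      ((gV (child_graph H T1 T2 K) - ?R) \<union> {r i}) (r i) es' u"
    using v by (simp add: child_graph_def)
  then show ?thesis unfolding gpath_def by (rule walk_to_spath)
qed

lemma main:
  assumes call: "mssp_call r k G i1 i2 H" and k: "0 < k"
    and reach: "\<forall>j<k. \<forall>v\<in>gV G - r ` {..<k}.
          \<exists>es. gpath G ((gV G - r ` {..<k}) \<union> {r j}) (r j) es v"
  shows "i2 < k \<and> (\<forall>i\<in>{i1..i2}. \<forall>u\<in>gV H - r ` {..<k}.
           \<exists>es. gpath H ((gV H - r ` {..<k}) \<union> {r i}) (r i) es u)"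
  using call
proof (induction rule: mssp_call.induct)
  case init
  then show ?case using k reach by auto
next
  case (left i1 i2 H Ta Tm Tb K)
  have "(i1 + i2) div 2 \<le> i2" using left.hyps(2) by simp
  then show ?case using left step_lemma[OF _ left.hyps(3) left.hyps(4) left.hyps(6)] by auto
next
  case (right i1 i2 H Ta Tm Tb K)
  have "i1 \<le> (i1 + i2) div 2" using right.hyps(2) by simp
  then show ?case using right step_lemma[OF _ right.hyps(4) right.hyps(5) right.hyps(6)] by auto
qed

theorem claim2:
  fixes G :: "('v, 'e) emb_graph" and r :: "nat \<Rightarrow> 'v" and k :: nat
    and H :: "('v, 'e) emb_graph" and i1 i2 i :: nat and u :: 'v
  assumes planar: "planar_embedded G"
    and outer: "outer_face G r k"
    and unique_sp: "\<forall>x\<in>gV G. \<forall>y\<in>gV G. gdist G (gV G) x y < top \<longrightarrow>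
          (\<exists>!es. gpath G (gV G) x es y \<and> path_w (gw G) es = gdist G (gV G) x y)"
    and no_enter: "\<forall>x y es. gpath G (gV G) x es y \<and> path_w (gw G) es = gdist G (gV G) x y
          \<and> gdist G (gV G) x y < top \<longrightarrow> (\<forall>e\<in>set es. ghd G e \<notin> r ` {..<k})"
    and reach: "\<forall>j<k. \<forall>v\<in>gV G - r ` {..<k}.
          \<exists>es. gpath G ((gV G - r ` {..<k}) \<union> {r j}) (r j) es v"
    and call: "mssp_call r k G i1 i2 H"
    and i_in: "i \<in> {i1..i2}"
    and u_in: "u \<in> gV H - r ` {..<k}"
  shows "\<exists>es. gpath H ((gV H - r ` {..<k}) \<union> {r i}) (r i) es u"
proof -
  have "0 < k" using outer unfolding outer_face_def by auto
  then show ?thesis using main[OF call _ reach] i_in u_in by blast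
qed

end
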